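(* Let $(p_n)$ be a sequence in $(0,1)$ such that $\alpha=\lim_{n\to\infty}p_n\log n$ exists with $0<\alpha<\infty$, and let $\gamma>0$. For the torn-paper channel with block length $n$ and tearing probability $p_n$, define the coverage $$c_\gamma=\frac1n\sum_{i=1}^K N_i\,\mathbf 1\{N_i\ge\gamma\log n\}.$$ Then for any $\epsilon>0$, $$\lim_{n\to\infty}\Pr\left(\left|c_\gamma-(\alpha\gamma+1)e^{-\alpha\gamma}\right|>\epsilon\right)=0.$$
   Context: Logarithms are base 2. The torn-paper channel with block length $n$ and tearing probability $p_n$: $N_1,N_2,\dots$ are i.i.d. $\mathrm{Geometric}(p_n)$ random variables (support $\{1,2,\dots\}$, mean $1/p_n$), $K$ is the smallest index with $\sum_{i=1}^K N_i\ge n$, and the input $X^n$ is cut into consecutive fragments of lengths $N_1,\dots,N_{K-1}$ and a final fragment ending at position $n$; the fragments are output in uniformly random order. *)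

theory Defs
  imports "HOL-Probability.Probability"
begin

text \<open>Torn-paper channel, block length n. Fragment lengths are indexed from 0:
  N 0, N 1, ... (paper: N_1, N_2, ...). K is the number of fragments, i.e. the
  least k with N 0 + ... + N (k-1) >= n.\<close>

definition tp_K :: "nat \<Rightarrow> (nat \<Rightarrow> nat) \<Rightarrow> nat" where
  "tp_K n Ns = (LEAST k. (\<Sum>i<k. Ns i) \<ge> n)"

definition tp_coverage :: "real \<Rightarrow> nat \<Rightarrow> (nat \<Rightarrow> nat) \<Rightarrow> real" where
  "tp_coverage \<gamma> n Ns =
     (\<Sum>i<tp_K n Ns. if real (Ns i) \<ge> \<gamma> * log 2 (real n) then real (Ns i) else 0) / real n"

end

theory Submission
  imports Defs "HOL-Real_Asymp.Real_Asymp"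
begin

lemma cheb_sum:
  fixes M :: "'a measure" and X :: "nat \<Rightarrow> 'a \<Rightarrow> nat" and P :: "nat measure" and g :: "nat \<Rightarrow> real"
  assumes PS: "prob_space M"
    and indep: "prob_space.indep_vars M (\<lambda>_. count_space UNIV) X UNIV"
    and distr: "\<And>i. distr M (count_space UNIV) (X i) = P"
    and int2: "integrable P (\<lambda>k. (g k)^2)"
    and s: "(\<integral>k. (g k)^2 \<partial>P) \<le> s"
    and a: "0 < a"
  shows "{x\<in>space M. a \<le> \<bar>(\<Sum>i<m. g (X i x)) - real m * (\<integral>k. g k \<partial>P)\<bar>} \<in> sets M"
    and "measure M {x\<in>space M. a \<le> \<bar>(\<Sum>i<m. g (X i x)) - real m * (\<integral>k. g k \<partial>P)\<bar>} \<le> real m * s / a^2"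
proof -
  interpret prob_space M by fact
  have Xm[measurable]: "X i \<in> M \<rightarrow>\<^sub>M count_space UNIV" for i
    using indep unfolding indep_vars_def by blast
  have gm[measurable]: "(\<lambda>x. h (X i x)) \<in> borel_measurable M" for h :: "nat \<Rightarrow> real" and i
    by (rule measurable_compose[OF Xm]) simp
  show "{x\<in>space M. a \<le> \<bar>(\<Sum>i<m. g (X i x)) - real m * (\<integral>k. g k \<partial>P)\<bar>} \<in> sets M"
    by measurable
  define \<mu> where "\<mu> = (\<integral>k. g k \<partial>P)"
  have int_g2: "integrable M (\<lambda>x. (g (X i x))^2)" for i
    using int2 distr[of i] integrable_distr_eq[OF Xm[of i], of "\<lambda>k. (g k)^2"] by simp
  have int_g: "integrable M (\<lambda>x. g (X i x))" for i
    by (rule square_integrable_imp_integrable[OF _ int_g2]) simp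
  have E_g: "(\<integral>x. g (X i x) \<partial>M) = \<mu>" for i
    using integral_distr[OF Xm[of i], of g] distr[of i] by (simp add: \<mu>_def)
  have E_g2: "(\<integral>x. (g (X i x))^2 \<partial>M) \<le> s" for i
    using integral_distr[OF Xm[of i], of "\<lambda>k. (g k)^2"] distr[of i] s by simp
  define Y where "Y i x = g (X i x) - \<mu>" for i x
  have Ym[measurable]: "Y i \<in> borel_measurable M" for i unfolding Y_def by measurable
  have int_Y: "integrable M (Y i)" for i unfolding Y_def using int_g by auto
  have E_Y: "expectation (Y i) = 0" for i unfolding Y_def using int_g E_g by (simp add: prob_space)
  have int_YY: "integrable M (\<lambda>x. Y i x * Y j x)" and E_YY: "expectation (\<lambda>x. Y i x * Y j x) \<le> (if i = j then s else 0)" for i j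
  proof -
    have "integrable M (\<lambda>x. Y i x * Y j x) \<and> expectation (\<lambda>x. Y i x * Y j x) \<le> (if i = j then s else 0)"
    proof (cases "i = j")
      case True
      have eq: "Y i x * Y i x = (g (X i x))^2 - 2 * \<mu> * g (X i x) + \<mu>^2" for x
        unfolding Y_def by (simp add: power2_eq_square algebra_simps)
      have i1: "integrable M (\<lambda>x. (g (X i x))^2 - 2 * \<mu> * g (X i x) + \<mu>^2)"
        using int_g int_g2 by auto
      have "expectation (\<lambda>x. (g (X i x))^2 - 2 * \<mu> * g (X i x) + \<mu>^2)
          = expectation (\<lambda>x. (g (X i x))^2) - 2 * \<mu> * \<mu> + \<mu>^2"
        using int_g int_g2 E_g by (simp add: prob_space)
      also have "\<dots> \<le> s" using E_g2[of i] zero_le_square[of \<mu>] unfolding power2_eq_square by linarith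
      finally have "expectation (\<lambda>x. Y i x * Y i x) \<le> s" "integrable M (\<lambda>x. Y i x * Y i x)"
        using i1 by (simp_all add: eq)
      then show ?thesis using True by simp
    next
      case False
      have ind: "indep_vars (\<lambda>_. borel) Y {i, j}"
        unfolding Y_def
        by (rule indep_vars_compose2[OF indep_vars_subset[OF indep]]) auto
      have "integrable M (\<lambda>x. \<Prod>l\<in>{i,j}. Y l x)"
        by (rule indep_vars_integrable[OF _ ind]) (auto intro: int_Y)
      moreover have "expectation (\<lambda>x. \<Prod>l\<in>{i,j}. Y l x) = (\<Prod>l\<in>{i,j}. expectation (Y l))"
        by (rule indep_vars_lebesgue_integral[OF _ ind]) (auto intro: int_Y)
      ultimately show ?thesis using False E_Y by simp
    qed
    then show "integrable M (\<lambda>x. Y i x * Y j x)" "expectation (\<lambda>x. Y i x * Y j x) \<le> (if i = j then s else 0)"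
      by auto
  qed
  define S where "S x = (\<Sum>i<m. Y i x)" for x
  have Sm[measurable]: "S \<in> borel_measurable M" unfolding S_def by measurable
  have S2: "(S x)^2 = (\<Sum>i<m. \<Sum>j<m. Y i x * Y j x)" for x
    unfolding S_def power2_eq_square sum_product ..
  have int_S2: "integrable M (\<lambda>x. (S x)^2)"
    unfolding S2 using int_YY by auto
  have "expectation (\<lambda>x. (S x)^2) = (\<Sum>i<m. \<Sum>j<m. expectation (\<lambda>x. Y i x * Y j x))"
    unfolding S2 using int_YY by (simp add: Bochner_Integration.integral_sum)
  also have "\<dots> \<le> (\<Sum>i<m. \<Sum>j<m. (if i = j then s else 0))"
    by (intro sum_mono E_YY)
  also have "\<dots> = real m * s" by simp
  finally have ES2: "expectation (\<lambda>x. (S x)^2) \<le> real m * s" .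
  have ES: "expectation S = 0"
    unfolding S_def using int_Y E_Y by (simp add: Bochner_Integration.integral_sum)
  have "prob {x\<in>space M. \<bar>S x - expectation S\<bar> \<ge> a} \<le> variance S / a\<^sup>2"
    by (rule Chebyshev_inequality) (auto simp: int_S2 a)
  also have "variance S = expectation (\<lambda>x. (S x)^2)" using ES by simp
  finally have ch: "prob {x\<in>space M. \<bar>S x - expectation S\<bar> \<ge> a} \<le> expectation (\<lambda>x. (S x)^2) / a\<^sup>2" .
  have "expectation (\<lambda>x. (S x)^2) / a^2 \<le> real m * s / a^2"
    using ES2 by (simp add: divide_right_mono)
  with ch have "prob {x\<in>space M. \<bar>S x\<bar> \<ge> a} \<le> real m * s / a^2"
    unfolding ES by simp
  moreover have "S x = (\<Sum>i<m. g (X i x)) - real m * \<mu>" for x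
    unfolding S_def Y_def by (simp add: sum_subtractf)
  ultimately show "measure M {x\<in>space M. a \<le> \<bar>(\<Sum>i<m. g (X i x)) - real m * (\<integral>k. g k \<partial>P)\<bar>} \<le> real m * s / a^2"
    by (simp add: \<mu>_def)
qed

lemma sums_deriv2:
  fixes z :: real
  assumes "norm z < 1"
  shows "(\<lambda>n. of_nat (Suc n) * of_nat (Suc (Suc n)) * z^n) sums (2 / (1 - z)^3)"
proof -
  have "(\<lambda>n. diffs (\<lambda>n. of_nat (Suc n)) n * z^n) sums (2 / (1 - z)^3)"
  proof (rule termdiffs_sums_strong[where K=1 and f="\<lambda>z. 1 / (1 - z)^2"])
    fix z :: real assume "norm z < 1"
    thus "(\<lambda>n. of_nat (Suc n) * z^n) sums (1 / (1 - z)^2)" by (rule geometric_deriv_sums)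
  next
    have z1: "z \<noteq> 1" using assms by auto
    have "((\<lambda>z. 1 / (1 - z)^2) has_field_derivative (- (of_nat 2 * (1 - z)^1 * (0 - 1))) / ((1 - z)^2 * (1 - z)^2)) (at z)"
      using z1 by (intro derivative_eq_intros) auto
    moreover have "(- (of_nat 2 * (1 - z)^1 * (0 - 1))) / ((1 - z)^2 * (1 - z)^2) = 2 / (1 - z)^3"
    proof -
      define w where "w = 1 - z"
      have w: "w \<noteq> 0" using z1 by (simp add: w_def)
      have "(- (of_nat 2 * w^1 * (0 - 1))) / (w^2 * w^2) = 2 / w^3"
        using w by (simp add: field_simps power2_eq_square power3_eq_cube)
      then show ?thesis by (simp add: w_def)
    qed
    ultimately show "((\<lambda>z. 1 / (1 - z)^2) has_field_derivative 2 / (1 - z)^3) (at z)" by simp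
  qed (use assms in auto)
  thus ?thesis unfolding diffs_def by (simp add: mult_ac)
qed

lemma geom_sum_int:
  fixes h :: "nat \<Rightarrow> real"
  assumes p: "0 < p" "p < 1" and hs: "(\<lambda>k. h k * ((1-p)^k * p)) sums s" and hnn: "\<And>k. 0 \<le> h k"
  shows "integrable (measure_pmf (geometric_pmf p)) h" "(\<integral>k. h k \<partial>measure_pmf (geometric_pmf p)) = s"
proof -
  have eq: "(\<lambda>k. pmf (geometric_pmf p) k * h k) = (\<lambda>k. h k * ((1-p)^k * p))"
    using p by (auto simp: mult_ac)
  have nn: "\<And>k. norm (h k * ((1-p)^k * p)) = h k * ((1-p)^k * p)"
    using p hnn by simp
  have ic: "integrable (count_space UNIV) (\<lambda>k. pmf (geometric_pmf p) k * h k)"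
    unfolding eq integrable_count_space_nat_iff nn using hs by (simp add: sums_iff)
  then show "integrable (measure_pmf (geometric_pmf p)) h"
    unfolding measure_pmf_eq_density by (subst integrable_density) (auto)
  have "(\<integral>k. h k \<partial>measure_pmf (geometric_pmf p)) = (\<integral>k. pmf (geometric_pmf p) k * h k \<partial>count_space UNIV)"
    unfolding measure_pmf_eq_density by (subst integral_density) auto
  also have "\<dots> = s" using ic hs unfolding eq by (subst integral_count_space_nat) (simp_all add: sums_iff)
  finally show "(\<integral>k. h k \<partial>measure_pmf (geometric_pmf p)) = s" .
qed

lemma moment2:
  assumes p: "0 < p" "p < 1"
  shows "integrable (measure_pmf (map_pmf Suc (geometric_pmf p))) (\<lambda>k. (real k)^2)"
    and "(\<integral>k. (real k)^2 \<partial>measure_pmf (map_pmf Suc (geometric_pmf p))) \<le> 2 / p^2"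
proof -
  define h where "h k = real (Suc k) * real (Suc (Suc k))" for k
  have "(\<lambda>k. p * (of_nat (Suc k) * of_nat (Suc (Suc k)) * (1-p)^k)) sums (p * (2 / (1 - (1-p))^3))"
    by (rule sums_mult, rule sums_deriv2) (use p in auto)
  moreover have "p * (2 / (1 - (1-p))^3) = 2 / p^2" using p by (simp add: field_simps power2_eq_square power3_eq_cube)
  ultimately have hs: "(\<lambda>k. h k * ((1-p)^k * p)) sums (2 / p^2)"
    by (simp add: h_def mult_ac)
  have hnn: "0 \<le> h k" for k by (simp add: h_def)
  have hi: "integrable (measure_pmf (geometric_pmf p)) h" and hI: "(\<integral>k. h k \<partial>measure_pmf (geometric_pmf p)) = 2/p^2"
    using geom_sum_int[OF p hs hnn] by auto
  have le: "(real (Suc k))^2 \<le> h k" for k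
    by (simp add: h_def power2_eq_square)
  have i2: "integrable (measure_pmf (geometric_pmf p)) (\<lambda>k. (real (Suc k))^2)"
    by (rule Bochner_Integration.integrable_bound[OF hi]) (auto simp: h_def power2_eq_square intro!: AE_I2)
  then show "integrable (measure_pmf (map_pmf Suc (geometric_pmf p))) (\<lambda>k. (real k)^2)"
    by simp
  have "(\<integral>k. (real (Suc k))^2 \<partial>measure_pmf (geometric_pmf p)) \<le> 2/p^2"
    unfolding hI[symmetric] by (rule integral_mono[OF i2 hi le])
  then show "(\<integral>k. (real k)^2 \<partial>measure_pmf (map_pmf Suc (geometric_pmf p))) \<le> 2 / p^2"
    by simp
qed

lemma moment_tail:
  assumes p: "0 < p" "p < 1" and T: "1 \<le> T"
  shows "integrable (measure_pmf (map_pmf Suc (geometric_pmf p))) (\<lambda>k. if T \<le> k then real k else 0)"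
    and "(\<integral>k. (if T \<le> k then real k else 0) \<partial>measure_pmf (map_pmf Suc (geometric_pmf p)))
          = (1-p)^(T-1) * (real T - 1 + 1/p)"
proof -
  define q where "q = 1 - p"
  have q: "0 < q" "q < 1" using p by (auto simp: q_def)
  obtain T' where T': "T = Suc T'" using T by (cases T) auto
  define F where "F k = (if T \<le> Suc k then real (Suc k) else 0) * (q^k * p)" for k
  have s1: "(\<lambda>i. q^i * p) sums (1 / (1 - q) * p)"
    by (rule sums_mult2, rule geometric_sums) (use q in auto)
  have s2: "(\<lambda>i. q^i * real i) sums (q / (1 - q)^2)"
    using geometric_sums_times_n[of q] q by simp
  have A: "(\<lambda>i. q^(T-1) * (real T * (q^i * p) + p * (q^i * real i))) sums
          (q^(T-1) * (real T * (1 / (1 - q) * p) + p * (q / (1 - q)^2)))"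
    by (intro sums_mult sums_add s1 s2)
  have B: "q^(T-1) * (real T * (1 / (1 - q) * p) + p * (q / (1 - q)^2)) = q^(T-1) * (real T - 1 + 1/p)"
    using p by (simp add: q_def field_simps power2_eq_square)
  have C: "F (i + (T - 1)) = q^(T-1) * (real T * (q^i * p) + p * (q^i * real i))" for i
    by (simp add: F_def T' power_add algebra_simps)
  have "(\<lambda>i. F (i + (T - 1))) sums (q^(T-1) * (real T - 1 + 1/p))"
    using A unfolding B C .
  moreover have "(\<Sum>i<T-1. F i) = 0" by (auto simp: F_def intro!: sum.neutral)
  ultimately have Fs: "F sums (q^(T-1) * (real T - 1 + 1/p))"
    by (simp add: sums_iff_shift)
  have "integrable (measure_pmf (geometric_pmf p)) (\<lambda>k. if T \<le> Suc k then real (Suc k) else 0)"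
     "(\<integral>k. (if T \<le> Suc k then real (Suc k) else 0) \<partial>measure_pmf (geometric_pmf p)) = q^(T-1) * (real T - 1 + 1/p)"
    using geom_sum_int[OF p Fs[unfolded F_def q_def]] by (auto simp: q_def)
  then show "integrable (measure_pmf (map_pmf Suc (geometric_pmf p))) (\<lambda>k. if T \<le> k then real k else 0)"
    "(\<integral>k. (if T \<le> k then real k else 0) \<partial>measure_pmf (map_pmf Suc (geometric_pmf p)))
          = (1-p)^(T-1) * (real T - 1 + 1/p)"
    by (simp_all add: q_def)
qed

lemma lim_np:
  fixes p :: "nat \<Rightarrow> real"
  assumes p_lim: "(\<lambda>n. p n * log 2 (real n)) \<longlonglongrightarrow> \<alpha>" and alpha_pos: "0 < \<alpha>"
  shows "filterlim (\<lambda>n. real n * p n) at_top sequentially"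
proof -
  have a: "filterlim (\<lambda>n. real n / log 2 (real n)) at_top sequentially" by real_asymp
  have f1: "filterlim (\<lambda>n. p n * log 2 (real n) * (real n / log 2 (real n))) at_top sequentially"
    by (rule filterlim_tendsto_pos_mult_at_top[OF p_lim alpha_pos a])
  have e1: "eventually (\<lambda>n. p n * log 2 (real n) * (real n / log 2 (real n)) = real n * p n) sequentially"
    using eventually_ge_at_top[of "2::nat"]
  proof eventually_elim
    case (elim n)
    then have "log 2 (real n) > 0" by simp
    then show ?case by (simp add: field_simps)
  qed
  show ?thesis using f1 filterlim_cong[OF refl refl e1] by simp
qed

lemma lim_p0:
  fixes p :: "nat \<Rightarrow> real"
  assumes p_lim: "(\<lambda>n. p n * log 2 (real n)) \<longlonglongrightarrow> \<alpha>"
  shows "p \<longlonglongrightarrow> 0"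
proof -
  have a: "((\<lambda>n. 1 / log 2 (real n)) \<longlongrightarrow> 0) sequentially" by real_asymp
  have "(\<lambda>n. p n * log 2 (real n) * (1 / log 2 (real n))) \<longlonglongrightarrow> \<alpha> * 0"
    by (rule tendsto_mult[OF p_lim a])
  moreover have "eventually (\<lambda>n. p n * log 2 (real n) * (1 / log 2 (real n)) = p n) sequentially"
    using eventually_ge_at_top[of "2::nat"]
  proof eventually_elim
    case (elim n)
    then have "log 2 (real n) > 0" by simp
    then show ?case by (simp add: field_simps)
  qed
  ultimately show ?thesis by (simp add: tendsto_cong)
qed

lemma lim_mu:
  fixes p :: "nat \<Rightarrow> real" and \<alpha> \<gamma> :: real
  assumes p_range: "\<And>n. 0 < p n \<and> p n < 1"
    and p_lim: "(\<lambda>n. p n * log 2 (real n)) \<longlonglongrightarrow> \<alpha>"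
    and gamma_pos: "0 < \<gamma>"
  defines "T \<equiv> \<lambda>n. nat \<lceil>\<gamma> * log 2 (real n)\<rceil>"
  shows "(\<lambda>n. p n * ((1 - p n)^(T n - 1) * (real (T n) - 1 + 1 / p n)))
           \<longlonglongrightarrow> (\<alpha> * \<gamma> + 1) * exp (- (\<alpha> * \<gamma>))"
proof -
  have p0: "p \<longlonglongrightarrow> 0" by (rule lim_p0[OF p_lim])
  have Tb: "\<gamma> * log 2 (real n) \<le> real (T n) \<and> real (T n) < \<gamma> * log 2 (real n) + 1 \<and> 1 \<le> T n" if "n \<ge> 2" for n
  proof -
    have "log 2 (real n) > 0" using that by simp
    then have pos: "\<gamma> * log 2 (real n) > 0" using gamma_pos by simp
    then have c1: "\<lceil>\<gamma> * log 2 (real n)\<rceil> \<ge> 1" by simp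
    then have "real (T n) = of_int \<lceil>\<gamma> * log 2 (real n)\<rceil>" unfolding T_def by simp
    moreover have "\<gamma> * log 2 (real n) \<le> of_int \<lceil>\<gamma> * log 2 (real n)\<rceil>"
      "of_int \<lceil>\<gamma> * log 2 (real n)\<rceil> < \<gamma> * log 2 (real n) + 1"
      using ceiling_correct[of "\<gamma> * log 2 (real n)"] by auto
    moreover have "1 \<le> T n" unfolding T_def using c1 by (subst le_nat_iff) auto
    ultimately show ?thesis by simp
  qed
  have A: "(\<lambda>n. p n * (real (T n) - 1)) \<longlonglongrightarrow> \<alpha> * \<gamma>"
  proof (rule tendsto_sandwich[where f="\<lambda>n. \<gamma> * (p n * log 2 (real n)) - p n" and h="\<lambda>n. \<gamma> * (p n * log 2 (real n))"])
    show "eventually (\<lambda>n. \<gamma> * (p n * log 2 (real n)) - p n \<le> p n * (real (T n) - 1)) sequentially"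
      using eventually_ge_at_top[of "2::nat"]
    proof eventually_elim
      case (elim n)
      have "p n * (\<gamma> * log 2 (real n) - 1) \<le> p n * (real (T n) - 1)"
        using Tb[OF elim] p_range[of n] by (intro mult_left_mono) auto
      then show ?case by (simp add: algebra_simps)
    qed
    show "eventually (\<lambda>n. p n * (real (T n) - 1) \<le> \<gamma> * (p n * log 2 (real n))) sequentially"
      using eventually_ge_at_top[of "2::nat"]
    proof eventually_elim
      case (elim n)
      have "p n * (real (T n) - 1) \<le> p n * (\<gamma> * log 2 (real n))"
        using Tb[OF elim] p_range[of n] by (intro mult_left_mono) auto
      then show ?case by (simp add: algebra_simps)
    qed
    show "(\<lambda>n. \<gamma> * (p n * log 2 (real n)) - p n) \<longlonglongrightarrow> \<alpha> * \<gamma>"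
      using tendsto_diff[OF tendsto_mult[OF tendsto_const[of \<gamma>] p_lim] p0] by (simp add: mult.commute)
    show "(\<lambda>n. \<gamma> * (p n * log 2 (real n))) \<longlonglongrightarrow> \<alpha> * \<gamma>"
      using tendsto_mult[OF tendsto_const[of \<gamma>] p_lim] by (simp add: mult.commute)
  qed
  have r: "(\<lambda>n. ln (1 - p n) / p n) \<longlonglongrightarrow> -1"
  proof -
    have l: "((\<lambda>x::real. ln (1 - x) / x) \<longlongrightarrow> -1) (at_right 0)" by real_asymp
    have "filterlim p (at_right 0) sequentially"
      by (rule tendsto_imp_filterlim_at_right[OF p0]) (use p_range in auto)
    from filterlim_compose[OF l this] show ?thesis .
  qed
  have B: "(\<lambda>n. exp (p n * (real (T n) - 1) * (ln (1 - p n) / p n))) \<longlonglongrightarrow> exp (\<alpha> * \<gamma> * -1)"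
    by (intro tendsto_exp tendsto_mult A r)
  have eq: "eventually (\<lambda>n. exp (p n * (real (T n) - 1) * (ln (1 - p n) / p n)) * (p n * (real (T n) - 1) + 1)
           = p n * ((1 - p n)^(T n - 1) * (real (T n) - 1 + 1 / p n))) sequentially"
    using eventually_ge_at_top[of "2::nat"]
  proof eventually_elim
    case (elim n)
    have T1: "1 \<le> T n" using Tb[OF elim] by auto
    have pn: "0 < p n" "p n < 1" using p_range[of n] by auto
    have "exp (p n * (real (T n) - 1) * (ln (1 - p n) / p n)) = exp (real (T n - 1) * ln (1 - p n))"
      using pn T1 by (simp add: of_nat_diff)
    also have "\<dots> = (1 - p n)^(T n - 1)"
      using pn by (simp add: exp_of_nat_mult)
    finally show ?case using pn by (simp add: field_simps)
  qed
  have "(\<lambda>n. exp (p n * (real (T n) - 1) * (ln (1 - p n) / p n)) * (p n * (real (T n) - 1) + 1))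
         \<longlonglongrightarrow> exp (\<alpha> * \<gamma> * -1) * (\<alpha> * \<gamma> + 1)"
    by (intro tendsto_mult B tendsto_add A tendsto_const)
  then have "(\<lambda>n. p n * ((1 - p n)^(T n - 1) * (real (T n) - 1 + 1 / p n)))
         \<longlonglongrightarrow> exp (\<alpha> * \<gamma> * -1) * (\<alpha> * \<gamma> + 1)"
    using eq by (rule Lim_transform_eventually)
  then show ?thesis by (simp add: mult.commute)
qed

lemma K_bounds:
  assumes "(\<Sum>i<m1. Ns i) < n" "n \<le> (\<Sum>i<m2. Ns i)"
  shows "m1 < tp_K n Ns" "tp_K n Ns \<le> m2"
proof -
  show le: "tp_K n Ns \<le> m2" unfolding tp_K_def by (rule Least_le) (rule assms(2))
  have "n \<le> (\<Sum>i<tp_K n Ns. Ns i)" unfolding tp_K_def by (rule LeastI) (rule assms(2))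
  show "m1 < tp_K n Ns"
  proof (rule ccontr)
    assume "\<not> m1 < tp_K n Ns"
    then have "(\<Sum>i<tp_K n Ns. Ns i) \<le> (\<Sum>i<m1. Ns i)" by (intro sum_mono2) auto
    with \<open>n \<le> (\<Sum>i<tp_K n Ns. Ns i)\<close> assms(1) show False by linarith
  qed
qed

lemma main_bound:
  fixes M :: "'a measure" and X :: "nat \<Rightarrow> 'a \<Rightarrow> nat" and n :: nat and p \<gamma> c \<epsilon> \<delta> :: real
  assumes PS: "prob_space M"
    and indep: "prob_space.indep_vars M (\<lambda>_. count_space UNIV) X UNIV"
    and distr: "\<And>i. distr M (count_space UNIV) (X i) = measure_pmf (map_pmf Suc (geometric_pmf p))"
    and p: "0 < p" "p < 1" and n2: "2 \<le> n" and gamma_pos: "0 < \<gamma>" and eps: "0 < \<epsilon>"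
    and delta: "0 < \<delta>" "\<delta> \<le> 1/2"
    and e2: "real (nat \<lfloor>(1-\<delta>) * (real n * p)\<rfloor>) * ((1-p)^(nat \<lceil>\<gamma> * log 2 (real n)\<rceil> - 1) * (real (nat \<lceil>\<gamma> * log 2 (real n)\<rceil>) - 1 + 1/p)) / real n \<ge> c - \<epsilon>/2"
    and e3: "real (nat \<lceil>(1+\<delta>) * (real n * p)\<rceil>) * ((1-p)^(nat \<lceil>\<gamma> * log 2 (real n)\<rceil> - 1) * (real (nat \<lceil>\<gamma> * log 2 (real n)\<rceil>) - 1 + 1/p)) / real n \<le> c + \<epsilon>/2"
  shows "measure M {\<omega> \<in> space M. \<bar>tp_coverage \<gamma> n (\<lambda>i. X i \<omega>) - c\<bar> > \<epsilon>}
           \<le> (4 / (real n * p) + 2 / (real n * p)^2) * (1/\<delta>^2 + 4/\<epsilon>^2)"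
proof -
  interpret prob_space M by fact
  define x where "x = real n * p"
  define T where "T = nat \<lceil>\<gamma> * log 2 (real n)\<rceil>"
  define \<mu> where "\<mu> = (1-p)^(T-1) * (real T - 1 + 1/p)"
  define m1 where "m1 = nat \<lfloor>(1-\<delta>) * x\<rfloor>"
  define m2 where "m2 = nat \<lceil>(1+\<delta>) * x\<rceil>"
  define P where "P = measure_pmf (map_pmf Suc (geometric_pmf p))"
  define g where "g k = (if T \<le> k then real k else 0)" for k
  have distr': "\<And>i. distr M (count_space UNIV) (X i) = P" using distr by (simp add: P_def)
  have x: "0 < x" using p n2 by (simp add: x_def)
  have npos: "0 < real n" using n2 by simp
  have tpos: "0 < \<gamma> * log 2 (real n)" using n2 gamma_pos by simp
  have T1: "1 \<le> T" unfolding T_def using tpos by (subst le_nat_iff) auto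
  have Tiff: "(\<gamma> * log 2 (real n) \<le> real k) = (T \<le> k)" for k
  proof -
    have "(T \<le> k) = (\<lceil>\<gamma> * log 2 (real n)\<rceil> \<le> int k)" unfolding T_def by (simp add: nat_le_iff)
    also have "\<dots> = (\<gamma> * log 2 (real n) \<le> real k)" by (simp add: ceiling_le_iff)
    finally show ?thesis by simp
  qed
  have m1le: "real m1 \<le> (1-\<delta>) * x" using x delta unfolding m1_def by simp
  have m2eq: "real m2 = of_int \<lceil>(1+\<delta>) * x\<rceil>"
  proof -
    have "0 \<le> (1+\<delta>) * x" using x delta by simp
    then show ?thesis unfolding m2_def by simp
  qed
  have m2le: "real m2 \<le> (1+\<delta>) * x + 1" using m2eq ceiling_correct[of "(1+\<delta>) * x"] by linarith
  have m2ge: "(1+\<delta>) * x \<le> real m2" using m2eq ceiling_correct[of "(1+\<delta>) * x"] by linarith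
  have pn: "p * real n = x" by (simp add: x_def)
  have int_r2: "integrable P (\<lambda>k. (real k)^2)" and E_r2: "(\<integral>k. (real k)^2 \<partial>P) \<le> 2/p^2"
    using moment2[OF p] by (simp_all add: P_def)
  have real_eq: "(\<lambda>k. if 1 \<le> k then real k else 0) = (\<lambda>k. real k)" by (rule ext) auto
  have E_r: "(\<integral>k. real k \<partial>P) = 1/p"
    using moment_tail(2)[OF p order.refl] unfolding real_eq by (simp add: P_def)
  have E_g: "(\<integral>k. g k \<partial>P) = \<mu>"
    using moment_tail(2)[OF p T1] by (simp add: P_def g_def[abs_def] \<mu>_def)
  have g2le: "(g k)^2 \<le> (real k)^2" for k by (simp add: g_def)
  have int_g2: "integrable P (\<lambda>k. (g k)^2)"
    by (rule Bochner_Integration.integrable_bound[OF int_r2]) (auto simp: P_def g_def intro!: AE_I2)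
  have E_g2: "(\<integral>k. (g k)^2 \<partial>P) \<le> 2/p^2"
    using integral_mono[OF int_g2 int_r2 g2le] E_r2 by linarith
  define C1 where "C1 = {\<omega>\<in>space M. \<delta> * real n \<le> \<bar>(\<Sum>i<m1. real (X i \<omega>)) - real m1 * (\<integral>k. real k \<partial>P)\<bar>}"
  define C2 where "C2 = {\<omega>\<in>space M. \<delta> * real n \<le> \<bar>(\<Sum>i<m2. real (X i \<omega>)) - real m2 * (\<integral>k. real k \<partial>P)\<bar>}"
  define C3 where "C3 = {\<omega>\<in>space M. \<epsilon> * real n / 2 \<le> \<bar>(\<Sum>i<m1. g (X i \<omega>)) - real m1 * (\<integral>k. g k \<partial>P)\<bar>}"
  define C4 where "C4 = {\<omega>\<in>space M. \<epsilon> * real n / 2 \<le> \<bar>(\<Sum>i<m2. g (X i \<omega>)) - real m2 * (\<integral>k. g k \<partial>P)\<bar>}"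
  have dn: "0 < \<delta> * real n" using delta npos by simp
  have en: "0 < \<epsilon> * real n / 2" using eps npos by simp
  note ch1 = cheb_sum[OF PS indep distr' int_r2 E_r2 dn, where m=m1, folded C1_def]
  note ch2 = cheb_sum[OF PS indep distr' int_r2 E_r2 dn, where m=m2, folded C2_def]
  note ch3 = cheb_sum[OF PS indep distr' int_g2 E_g2 en, where m=m1, folded C3_def]
  note ch4 = cheb_sum[OF PS indep distr' int_g2 E_g2 en, where m=m2, folded C4_def]
  define B where "B = {\<omega> \<in> space M. \<bar>tp_coverage \<gamma> n (\<lambda>i. X i \<omega>) - c\<bar> > \<epsilon>}"
  have incl: "B \<subseteq> C1 \<union> C2 \<union> C3 \<union> C4"
  proof
    fix \<omega> assume "\<omega> \<in> B"
    then have \<omega>: "\<omega> \<in> space M" and bad: "\<bar>tp_coverage \<gamma> n (\<lambda>i. X i \<omega>) - c\<bar> > \<epsilon>" by (auto simp: B_def)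
    show "\<omega> \<in> C1 \<union> C2 \<union> C3 \<union> C4"
    proof (rule ccontr)
      assume "\<omega> \<notin> C1 \<union> C2 \<union> C3 \<union> C4"
      then have n1: "\<bar>(\<Sum>i<m1. real (X i \<omega>)) - real m1 * (1/p)\<bar> < \<delta> * real n"
        and n2': "\<bar>(\<Sum>i<m2. real (X i \<omega>)) - real m2 * (1/p)\<bar> < \<delta> * real n"
        and n3: "\<bar>(\<Sum>i<m1. g (X i \<omega>)) - real m1 * \<mu>\<bar> < \<epsilon> * real n / 2"
        and n4: "\<bar>(\<Sum>i<m2. g (X i \<omega>)) - real m2 * \<mu>\<bar> < \<epsilon> * real n / 2"
        using \<omega> by (auto simp: C1_def C2_def C3_def C4_def E_r E_g not_le)
      have "real m1 * (1/p) \<le> (1-\<delta>) * real n"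
        using m1le p by (simp add: x_def field_simps)
      then have "(\<Sum>i<m1. real (X i \<omega>)) < real n" using n1 unfolding abs_less_iff left_diff_distrib by linarith
      then have "real (\<Sum>i<m1. X i \<omega>) < real n" by (simp add: of_nat_sum)
      then have s1: "(\<Sum>i<m1. X i \<omega>) < n" by (simp only: of_nat_less_iff)
      have "(1+\<delta>) * real n \<le> real m2 * (1/p)"
        using m2ge p by (simp add: x_def field_simps)
      then have "real n < (\<Sum>i<m2. real (X i \<omega>))" using n2' delta npos unfolding abs_less_iff by (simp add: algebra_simps)
      then have "real n < real (\<Sum>i<m2. X i \<omega>)" by (simp add: of_nat_sum)
      then have "n < (\<Sum>i<m2. X i \<omega>)" by (simp only: of_nat_less_iff)
      then have s2: "n \<le> (\<Sum>i<m2. X i \<omega>)" by simp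
      define K where "K = tp_K n (\<lambda>i. X i \<omega>)"
      have K: "m1 \<le> K" "K \<le> m2" using K_bounds[OF s1 s2] by (auto simp: K_def)
      have gnn: "0 \<le> g k" for k by (simp add: g_def)
      have G1: "(\<Sum>i<m1. g (X i \<omega>)) \<le> (\<Sum>i<K. g (X i \<omega>))" using K gnn by (intro sum_mono2) auto
      have G2: "(\<Sum>i<K. g (X i \<omega>)) \<le> (\<Sum>i<m2. g (X i \<omega>))" using K gnn by (intro sum_mono2) auto
      have cov: "tp_coverage \<gamma> n (\<lambda>i. X i \<omega>) = (\<Sum>i<K. g (X i \<omega>)) / real n"
        unfolding tp_coverage_def K_def g_def Tiff ..
      have "(c - \<epsilon>/2) * real n \<le> real m1 * \<mu>" using e2 npos
        by (simp add: m1_def x_def T_def \<mu>_def field_simps)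
      then have lo: "(c - \<epsilon>) * real n < (\<Sum>i<K. g (X i \<omega>))" using n3 G1 unfolding abs_less_iff by (simp add: algebra_simps)
      have "real m2 * \<mu> \<le> (c + \<epsilon>/2) * real n" using e3 npos
        by (simp add: m2_def x_def T_def \<mu>_def field_simps)
      then have hi: "(\<Sum>i<K. g (X i \<omega>)) < (c + \<epsilon>) * real n" using n4 G2 unfolding abs_less_iff by (simp add: algebra_simps)
      have "c - \<epsilon> < tp_coverage \<gamma> n (\<lambda>i. X i \<omega>)" using lo npos unfolding cov by (simp add: field_simps)
      moreover have "tp_coverage \<gamma> n (\<lambda>i. X i \<omega>) < c + \<epsilon>" using hi npos unfolding cov by (simp add: field_simps)
      ultimately show False using bad by linarith
    qed
  qed
  have "measure M B \<le> measure M (C1 \<union> C2 \<union> C3 \<union> C4)"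
  proof (cases "B \<in> sets M")
    case True
    then show ?thesis using incl ch1(1) ch2(1) ch3(1) ch4(1) by (intro finite_measure_mono) auto
  next
    case False
    then show ?thesis by (simp add: measure_notin_sets)
  qed
  also have "\<dots> \<le> measure M C1 + measure M C2 + measure M C3 + measure M C4"
    using ch1(1) ch2(1) ch3(1) ch4(1)
    by (smt (verit) measure_Un_le sets.Un)
  also have "\<dots> \<le> real m1 * (2/p^2) / (\<delta> * real n)^2 + real m2 * (2/p^2) / (\<delta> * real n)^2
       + real m1 * (2/p^2) / (\<epsilon> * real n / 2)^2 + real m2 * (2/p^2) / (\<epsilon> * real n / 2)^2"
    using ch1(2) ch2(2) ch3(2) ch4(2) by linarith
  also have "\<dots> = (real m1 + real m2) * 2 / x^2 * (1/\<delta>^2 + 4/\<epsilon>^2)"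
    using p npos delta eps by (simp add: x_def field_simps power2_eq_square)
  also have "\<dots> \<le> (2 * x + 1) * 2 / x^2 * (1/\<delta>^2 + 4/\<epsilon>^2)"
  proof -
    have "real m1 + real m2 \<le> 2 * x + 1" using m1le m2le unfolding left_diff_distrib distrib_right by linarith
    then show ?thesis using x delta eps
      by (intro mult_right_mono divide_right_mono mult_right_mono) auto
  qed
  also have "\<dots> = (4 / x + 2 / x^2) * (1/\<delta>^2 + 4/\<epsilon>^2)"
    using x by (simp add: field_simps power2_eq_square)
  finally show ?thesis by (simp add: B_def x_def)
qed

lemma e_lower:
  fixes p n \<mu> m \<delta> :: real
  assumes "0 < p" "0 < n" "0 \<le> \<mu>" "(1-\<delta>) * (n * p) - 1 \<le> m"
  shows "(1-\<delta>) * (p * \<mu>) - (p * \<mu>) / (n * p) \<le> m * \<mu> / n"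
proof -
  have "((1-\<delta>) * (n * p) - 1) * \<mu> \<le> m * \<mu>" using assms by (intro mult_right_mono) auto
  then have "((1-\<delta>) * (n * p) - 1) * \<mu> / n \<le> m * \<mu> / n" using assms by (intro divide_right_mono) auto
  moreover have "((1-\<delta>) * (n * p) - 1) * \<mu> / n = (1-\<delta>) * (p * \<mu>) - (p * \<mu>) / (n * p)"
    using assms by (simp add: field_simps)
  ultimately show ?thesis by simp
qed

lemma e_upper:
  fixes p n \<mu> m \<delta> :: real
  assumes "0 < p" "0 < n" "0 \<le> \<mu>" "m \<le> (1+\<delta>) * (n * p) + 1"
  shows "m * \<mu> / n \<le> (1+\<delta>) * (p * \<mu>) + (p * \<mu>) / (n * p)"
proof -
  have "m * \<mu> \<le> ((1+\<delta>) * (n * p) + 1) * \<mu>" using assms by (intro mult_right_mono) auto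
  then have "m * \<mu> / n \<le> ((1+\<delta>) * (n * p) + 1) * \<mu> / n" using assms by (intro divide_right_mono) auto
  moreover have "((1+\<delta>) * (n * p) + 1) * \<mu> / n = (1+\<delta>) * (p * \<mu>) + (p * \<mu>) / (n * p)"
    using assms by (simp add: field_simps)
  ultimately show ?thesis by simp
qed

theorem lemma6:
  fixes p :: "nat \<Rightarrow> real" and \<alpha> \<gamma> \<epsilon> :: real
    and M :: "nat \<Rightarrow> 'a measure" and N :: "nat \<Rightarrow> nat \<Rightarrow> 'a \<Rightarrow> nat"
  assumes p_range: "\<And>n. 0 < p n \<and> p n < 1"
    and p_lim: "(\<lambda>n. p n * log 2 (real n)) \<longlonglongrightarrow> \<alpha>"
    and alpha_pos: "0 < \<alpha>"
    and gamma_pos: "0 < \<gamma>"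
    and prob: "\<And>n. prob_space (M n)"
    and indep: "\<And>n. prob_space.indep_vars (M n) (\<lambda>_. count_space UNIV) (N n) UNIV"
    and geom: "\<And>n i. distr (M n) (count_space UNIV) (N n i)
                        = measure_pmf (map_pmf Suc (geometric_pmf (p n)))"
    and eps_pos: "0 < \<epsilon>"
  shows "(\<lambda>n. measure (M n) {\<omega> \<in> space (M n).
            \<bar>tp_coverage \<gamma> n (\<lambda>i. N n i \<omega>) - (\<alpha> * \<gamma> + 1) * exp (- (\<alpha> * \<gamma>))\<bar> > \<epsilon>})
         \<longlonglongrightarrow> 0"
proof -
  define c where "c = (\<alpha> * \<gamma> + 1) * exp (- (\<alpha> * \<gamma>))"
  have c0: "0 < c" using alpha_pos gamma_pos by (simp add: c_def add_pos_pos)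
  define \<delta> where "\<delta> = min (1/2) (\<epsilon> / (4 * (c + 1)))"
  have d01: "0 < \<delta>" using c0 eps_pos unfolding \<delta>_def by simp
  have d02: "\<delta> \<le> 1/2" unfolding \<delta>_def by (rule min.cobounded1)
  note d0 = d01 d02
  have dc: "\<delta> * c \<le> \<epsilon> / 4"
  proof -
    have "\<delta> * c \<le> \<epsilon> / (4 * (c + 1)) * c" using c0 by (intro mult_right_mono) (auto simp: \<delta>_def)
    also have "\<dots> \<le> \<epsilon> / (4 * (c + 1)) * (c + 1)" using c0 eps_pos by (intro mult_left_mono) auto
    also have "\<dots> = \<epsilon> / 4" using c0 by (simp add: field_simps)
    finally show ?thesis .
  qed
  define x where "x n = real n * p n" for n
  define T where "T n = nat \<lceil>\<gamma> * log 2 (real n)\<rceil>" for n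
  define \<mu> where "\<mu> n = (1 - p n)^(T n - 1) * (real (T n) - 1 + 1 / p n)" for n
  have xlim: "filterlim x at_top sequentially" unfolding x_def by (rule lim_np[OF p_lim alpha_pos])
  have ix: "(\<lambda>n. inverse (x n)) \<longlonglongrightarrow> 0" by (rule tendsto_inverse_0_at_top[OF xlim])
  have mulim: "(\<lambda>n. p n * \<mu> n) \<longlonglongrightarrow> c"
    using lim_mu[OF p_range p_lim gamma_pos] by (simp add: \<mu>_def T_def c_def)
  have L1: "(\<lambda>n. (1-\<delta>) * (p n * \<mu> n) - (p n * \<mu> n) * inverse (x n)) \<longlonglongrightarrow> (1-\<delta>) * c - c * 0"
    by (intro tendsto_intros mulim ix)
  have L2: "(\<lambda>n. (1+\<delta>) * (p n * \<mu> n) + (p n * \<mu> n) * inverse (x n)) \<longlonglongrightarrow> (1+\<delta>) * c + c * 0"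
    by (intro tendsto_intros mulim ix)
  have ev1: "eventually (\<lambda>n. c - \<epsilon>/2 < (1-\<delta>) * (p n * \<mu> n) - (p n * \<mu> n) * inverse (x n)) sequentially"
    by (rule order_tendstoD(1)[OF L1]) (use dc eps_pos in \<open>simp add: algebra_simps\<close>)
  have ev2: "eventually (\<lambda>n. (1+\<delta>) * (p n * \<mu> n) + (p n * \<mu> n) * inverse (x n) < c + \<epsilon>/2) sequentially"
    by (rule order_tendstoD(2)[OF L2]) (use dc eps_pos in \<open>simp add: algebra_simps\<close>)
  define U where "U n = (4 * inverse (x n) + 2 * (inverse (x n))^2) * (1/\<delta>^2 + 4/\<epsilon>^2)" for n
  have Ulim: "U \<longlonglongrightarrow> 0"
  proof -
    have "U \<longlonglongrightarrow> (4 * 0 + 2 * 0^2) * (1/\<delta>^2 + 4/\<epsilon>^2)"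
      unfolding U_def[abs_def] by (intro tendsto_intros ix)
    then show ?thesis by simp
  qed
  show ?thesis unfolding c_def[symmetric]
  proof (rule tendsto_sandwich[where f="\<lambda>_. 0" and h=U])
    show "eventually (\<lambda>n. 0 \<le> measure (M n) {\<omega> \<in> space (M n). \<bar>tp_coverage \<gamma> n (\<lambda>i. N n i \<omega>) - c\<bar> > \<epsilon>}) sequentially"
      by simp
    show "(\<lambda>_. 0::real) \<longlonglongrightarrow> 0" by simp
    show "U \<longlonglongrightarrow> 0" by (rule Ulim)
    show "eventually (\<lambda>n. measure (M n) {\<omega> \<in> space (M n). \<bar>tp_coverage \<gamma> n (\<lambda>i. N n i \<omega>) - c\<bar> > \<epsilon>} \<le> U n) sequentially"
      using ev1 ev2 eventually_ge_at_top[of "2::nat"]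
    proof eventually_elim
      case (elim n)
      have pn: "0 < p n" "p n < 1" using p_range[of n] by auto
      have npos: "0 < real n" using elim by simp
      have x0: "0 < x n" using pn npos by (simp add: x_def)
      have mu0: "0 \<le> \<mu> n" using pn unfolding \<mu>_def
      proof -
        have "0 < \<gamma> * log 2 (real n)" using elim(3) gamma_pos by simp
        then have "1 \<le> T n" unfolding T_def by (subst le_nat_iff) auto
        then show "0 \<le> (1 - p n)^(T n - 1) * (real (T n) - 1 + 1 / p n)" using pn by simp
      qed
      have y0: "0 \<le> (1-\<delta>) * (real n * p n)" using d0 pn npos by simp
      have m1ge: "(1-\<delta>) * (real n * p n) - 1 \<le> real (nat \<lfloor>(1-\<delta>) * (real n * p n)\<rfloor>)"
        using y0 floor_correct[of "(1-\<delta>) * (real n * p n)"] by simp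
      have y0': "0 \<le> (1+\<delta>) * (real n * p n)" using d0 pn npos by simp
      have m2le: "real (nat \<lceil>(1+\<delta>) * (real n * p n)\<rceil>) \<le> (1+\<delta>) * (real n * p n) + 1"
        using y0' ceiling_correct[of "(1+\<delta>) * (real n * p n)"] by simp
      have xi: "p n * \<mu> n / (real n * p n) = p n * \<mu> n * inverse (x n)"
        by (simp only: x_def divide_inverse)
      have e2: "c - \<epsilon>/2 \<le> real (nat \<lfloor>(1-\<delta>) * (real n * p n)\<rfloor>) * \<mu> n / real n"
        using e_lower[OF pn(1) npos mu0 m1ge] elim(1) unfolding xi by linarith
      have e3: "real (nat \<lceil>(1+\<delta>) * (real n * p n)\<rceil>) * \<mu> n / real n \<le> c + \<epsilon>/2"
        using e_upper[OF pn(1) npos mu0 m2le] elim(2) unfolding xi by linarith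
      have "measure (M n) {\<omega> \<in> space (M n). \<bar>tp_coverage \<gamma> n (\<lambda>i. N n i \<omega>) - c\<bar> > \<epsilon>}
           \<le> (4 / (real n * p n) + 2 / (real n * p n)^2) * (1/\<delta>^2 + 4/\<epsilon>^2)"
        by (rule main_bound[OF prob indep geom pn elim(3) gamma_pos eps_pos d0])
           (use e2 e3 in \<open>simp_all only: \<mu>_def T_def\<close>)
      also have "\<dots> = U n"
      proof -
        have "inverse (x n) ^ 2 = 1 / (real n * p n)^2" by (simp add: x_def power_one_over divide_inverse power_mult_distrib power_inverse)
        moreover have "inverse (x n) = 1 / (real n * p n)" by (simp add: x_def divide_inverse)
        ultimately show ?thesis unfolding U_def by simp
      qed
      finally show ?case .
    qed
  qed
qed

end
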